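(* Let $G$ be a graph whose twin graph $G^*$ is isomorphic to a 5-cycle with one chord (so $G^*$ has two adjacent degree-3 vertices and three degree-2 vertices, two of which are adjacent to each other), where the two adjacent degree-2 vertices are of type (1) and the other three vertices are of type (1K). Then $D(G)\neq n(G)-2$.
   Context: All graphs are finite and simple; $n(G)=|V(G)|$; $N_G(u)$ is the neighborhood of $u$. A distinguishing coloring of a graph $G$ is a (not necessarily proper) vertex coloring such that the only automorphism of $G$ mapping every vertex to a vertex of the same color is the identity; the distinguishing number $D(G)$ is the minimum number of colors in a distinguishing coloring of $G$. Two distinct vertices $u,v$ are twins if $N_G(u)\setminus\{v\}=N_G(v)\setminus\{u\}$. The relation $u\equiv v$ iff $u=v$ or $u,v$ are twins is an equivalence relation; the class of $v$ is denoted $v^*$. The twin graph $G^*$ has the equivalence classes as vertices, distinct classes $u^*,v^*$ being adjacent iff $uv\in E(G)$. Each class induces a complete or an edgeless graph. A class $v^*$ is of type (1) if $|v^*|=1$, of type (K) if $|v^*|\ge 2$ and it induces a complete graph, and of type (N) if $|v^*|\ge2$ and it induces an edgeless graph; type (1K) means type (1) or (K), type (1N) means (1) or (N), and type (KN) means (K) or (N). *)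

theory Defs
  imports Main
begin

definition graph :: "'a set \<Rightarrow> ('a \<Rightarrow> 'a \<Rightarrow> bool) \<Rightarrow> bool" where
  "graph V E \<longleftrightarrow> finite V \<and> (\<forall>u v. E u v \<longrightarrow> u \<in> V \<and> v \<in> V)
     \<and> (\<forall>u v. E u v \<longrightarrow> E v u) \<and> (\<forall>u. \<not> E u u)"

definition nbhd :: "'a set \<Rightarrow> ('a \<Rightarrow> 'a \<Rightarrow> bool) \<Rightarrow> 'a \<Rightarrow> 'a set" where
  "nbhd V E u = {v \<in> V. E u v}"

definition twins :: "'a set \<Rightarrow> ('a \<Rightarrow> 'a \<Rightarrow> bool) \<Rightarrow> 'a \<Rightarrow> 'a \<Rightarrow> bool" where
  "twins V E u v \<longleftrightarrow> u \<in> V \<and> v \<in> V \<and> u \<noteq> v \<and> nbhd V E u - {v} = nbhd V E v - {u}"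

definition twin_class :: "'a set \<Rightarrow> ('a \<Rightarrow> 'a \<Rightarrow> bool) \<Rightarrow> 'a \<Rightarrow> 'a set" where
  "twin_class V E v = {u \<in> V. u = v \<or> twins V E u v}"

definition twin_vertices :: "'a set \<Rightarrow> ('a \<Rightarrow> 'a \<Rightarrow> bool) \<Rightarrow> 'a set set" where
  "twin_vertices V E = twin_class V E ` V"

definition twin_edges :: "'a set \<Rightarrow> ('a \<Rightarrow> 'a \<Rightarrow> bool) \<Rightarrow> 'a set \<Rightarrow> 'a set \<Rightarrow> bool" where
  "twin_edges V E X Y \<longleftrightarrow> X \<in> twin_vertices V E \<and> Y \<in> twin_vertices V E \<and> X \<noteq> Y
     \<and> (\<exists>u\<in>X. \<exists>v\<in>Y. E u v)"

definition graph_iso :: "'a set \<Rightarrow> ('a \<Rightarrow> 'a \<Rightarrow> bool) \<Rightarrow> 'b set \<Rightarrow> ('b \<Rightarrow> 'b \<Rightarrow> bool)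
    \<Rightarrow> ('a \<Rightarrow> 'b) \<Rightarrow> bool" where
  "graph_iso V E W F f \<longleftrightarrow> bij_betw f V W \<and> (\<forall>u\<in>V. \<forall>v\<in>V. E u v \<longleftrightarrow> F (f u) (f v))"

text \<open>The 5-cycle 0-1-2-3-4-0 with chord 0-2: degree-3 vertices 0,2 (adjacent);
  degree-2 vertices 1,3,4, where 3 and 4 are adjacent.\<close>
definition C5chord_vertices :: "nat set" where
  "C5chord_vertices = {0..<5}"

definition C5chord_edge :: "nat \<Rightarrow> nat \<Rightarrow> bool" where
  "C5chord_edge i j \<longleftrightarrow> {i, j} \<in> {{0,1}, {1,2}, {2,3}, {3,4}, {4,0}, {0,2}}"

definition type_1 :: "'a set \<Rightarrow> bool" where
  "type_1 X \<longleftrightarrow> card X = 1"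

definition type_K :: "('a \<Rightarrow> 'a \<Rightarrow> bool) \<Rightarrow> 'a set \<Rightarrow> bool" where
  "type_K E X \<longleftrightarrow> card X \<ge> 2 \<and> (\<forall>u\<in>X. \<forall>v\<in>X. u \<noteq> v \<longrightarrow> E u v)"

definition type_1K :: "('a \<Rightarrow> 'a \<Rightarrow> bool) \<Rightarrow> 'a set \<Rightarrow> bool" where
  "type_1K E X \<longleftrightarrow> type_1 X \<or> type_K E X"

definition automorphism :: "'a set \<Rightarrow> ('a \<Rightarrow> 'a \<Rightarrow> bool) \<Rightarrow> ('a \<Rightarrow> 'a) \<Rightarrow> bool" where
  "automorphism V E f \<longleftrightarrow> graph_iso V E V E f"

definition distinguishing :: "'a set \<Rightarrow> ('a \<Rightarrow> 'a \<Rightarrow> bool) \<Rightarrow> ('a \<Rightarrow> nat) \<Rightarrow> bool" where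
  "distinguishing V E c \<longleftrightarrow>
     (\<forall>f. automorphism V E f \<and> (\<forall>v\<in>V. c (f v) = c v) \<longrightarrow> (\<forall>v\<in>V. f v = v))"

definition dist_number :: "'a set \<Rightarrow> ('a \<Rightarrow> 'a \<Rightarrow> bool) \<Rightarrow> nat" where
  "dist_number V E = (LEAST k. \<exists>c :: 'a \<Rightarrow> nat. c ` V \<subseteq> {..<k} \<and> distinguishing V E c)"

end

theory Submission
  imports Defs
begin

lemma C5e: "C5chord_edge i j \<longleftrightarrow> (i,j) \<in> {(0,1),(1,0),(1,2),(2,1),(2,3),(3,2),(3,4),(4,3),(4,0),(0,4),(0,2),(2,0)}"
  unfolding C5chord_edge_def by (auto simp: doubleton_eq_iff)

lemma twins_trans:
  assumes g: "graph V E" and uv: "twins V E u v" and vw: "twins V E v w" and "u \<noteq> w"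
  shows "twins V E u w"
proof -
  have sym: "\<And>x y. E x y \<Longrightarrow> E y x" using g by (auto simp: graph_def)
  have A: "\<And>x. x \<noteq> u \<Longrightarrow> x \<noteq> v \<Longrightarrow> x \<in> V \<Longrightarrow> E u x \<longleftrightarrow> E v x"
    using uv unfolding twins_def nbhd_def by blast
  have B: "\<And>x. x \<noteq> v \<Longrightarrow> x \<noteq> w \<Longrightarrow> x \<in> V \<Longrightarrow> E v x \<longleftrightarrow> E w x"
    using vw unfolding twins_def nbhd_def by blast
  have V: "u \<in> V" "v \<in> V" "w \<in> V" "u \<noteq> v" "v \<noteq> w" using uv vw by (auto simp: twins_def)
  have C: "\<And>x. x \<noteq> u \<Longrightarrow> x \<noteq> w \<Longrightarrow> x \<in> V \<Longrightarrow> E u x \<longleftrightarrow> E w x"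
  proof -
    fix x assume x: "x \<noteq> u" "x \<noteq> w" "x \<in> V"
    show "E u x \<longleftrightarrow> E w x"
    proof (cases "x = v")
      case False thus ?thesis using A[of x] B[of x] x by simp
    next
      case True
      have "E u v \<longleftrightarrow> E v u" using sym by blast
      also have "\<dots> \<longleftrightarrow> E w u" using B[of u] V \<open>u \<noteq> w\<close> by simp
      also have "\<dots> \<longleftrightarrow> E u w" using sym by blast
      also have "\<dots> \<longleftrightarrow> E v w" using A[of w] V \<open>u \<noteq> w\<close> by simp
      also have "\<dots> \<longleftrightarrow> E w v" using sym by blast
      finally show ?thesis using True by simp
    qed
  qed
  have irr: "\<And>x. \<not> E x x" using g by (auto simp: graph_def)
  show ?thesis unfolding twins_def nbhd_def using V C \<open>u \<noteq> w\<close> irr 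
    by (intro conjI set_eqI iffI) (auto, (metis C)+)
qed

lemma twins_sym: "twins V E u v \<Longrightarrow> twins V E v u" by (auto simp: twins_def)

lemma tc_eq:
  assumes g: "graph V E" and "u \<in> twin_class V E v"
  shows "twin_class V E u = twin_class V E v"
  using assms twins_trans[OF g] twins_sym unfolding twin_class_def
  by (smt (verit, ccfv_threshold) Collect_cong mem_Collect_eq twins_def)

lemma twin_edge:
  assumes g: "graph V E" and "twins V E u u0" "E u0 w" "w \<noteq> u"
  shows "E u w"
proof -
  have "w \<in> V" "w \<noteq> u0" using g assms by (auto simp: graph_def)
  thus ?thesis using assms unfolding twins_def nbhd_def by blast
qed

lemma aut_nbhd:
  assumes "automorphism V E f" "graph V E" "v \<in> V"
  shows "f ` nbhd V E v = nbhd V E (f v)"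
proof -
  have b: "bij_betw f V V" and i: "\<forall>u\<in>V. \<forall>w\<in>V. E u w \<longleftrightarrow> E (f u) (f w)"
    using assms(1) by (auto simp: automorphism_def graph_iso_def)
  have EV: "\<And>x y. E x y \<Longrightarrow> y \<in> V" using assms(2) by (auto simp: graph_def)
  show ?thesis
  proof
    show "f ` nbhd V E v \<subseteq> nbhd V E (f v)"
      using b i assms(3) by (auto simp: nbhd_def bij_betw_def)
  next
    show "nbhd V E (f v) \<subseteq> f ` nbhd V E v"
    proof
      fix x assume "x \<in> nbhd V E (f v)"
      hence x: "x \<in> V" "E (f v) x" by (auto simp: nbhd_def)
      then obtain w where "w \<in> V" "x = f w" using b by (auto simp: bij_betw_def)
      thus "x \<in> f ` nbhd V E v" using i x assms(3) by (auto simp: nbhd_def)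
    qed
  qed
qed

theorem lemma4p8:
  fixes V :: "'a set" and E :: "'a \<Rightarrow> 'a \<Rightarrow> bool" and \<phi> :: "nat \<Rightarrow> 'a set"
  assumes "graph V E"
    and "graph_iso C5chord_vertices C5chord_edge (twin_vertices V E) (twin_edges V E) \<phi>"
    and "type_1 (\<phi> 3)" and "type_1 (\<phi> 4)"
    and "type_1K E (\<phi> 0)" and "type_1K E (\<phi> 1)" and "type_1K E (\<phi> 2)"
  shows "dist_number V E \<noteq> card V - 2"
proof -
  note g = assms(1)
  have finV: "finite V" and EV: "\<And>x y. E x y \<Longrightarrow> x \<in> V \<and> y \<in> V"
    and sym: "\<And>x y. E x y \<Longrightarrow> E y x" and irr: "\<And>x. \<not> E x x"
    using g by (auto simp: graph_def)
  have bij: "bij_betw \<phi> {0..<5} (twin_vertices V E)"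
    and iso: "\<forall>u\<in>{0..<5}. \<forall>v\<in>{0..<5}. C5chord_edge u v \<longleftrightarrow> twin_edges V E (\<phi> u) (\<phi> v)"
    using assms(2) by (auto simp: graph_iso_def C5chord_vertices_def)
  have cls: "\<And>i. i < 5 \<Longrightarrow> \<exists>r\<in>V. \<phi> i = twin_class V E r"
  proof -
    fix i :: nat assume "i < 5"
    hence "\<phi> i \<in> \<phi> ` {0..<5}" by auto
    thus "\<exists>r\<in>V. \<phi> i = twin_class V E r" using bij by (auto simp: bij_betw_def twin_vertices_def)
  qed
  have self: "\<And>v. v \<in> V \<Longrightarrow> v \<in> twin_class V E v" by (auto simp: twin_class_def)
  have subV: "\<And>i. i < 5 \<Longrightarrow> \<phi> i \<subseteq> V" using cls by (auto simp: twin_class_def)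
  have ne: "\<And>i. i < 5 \<Longrightarrow> \<phi> i \<noteq> {}" using cls self by blast
  have fin: "\<And>i. i < 5 \<Longrightarrow> finite (\<phi> i)" using subV finV finite_subset by blast
  have clsu: "\<And>i u. i < 5 \<Longrightarrow> u \<in> \<phi> i \<Longrightarrow> \<phi> i = twin_class V E u"
    using cls tc_eq[OF g] by metis
  have same: "\<And>i u w. i < 5 \<Longrightarrow> u \<in> \<phi> i \<Longrightarrow> w \<in> \<phi> i \<Longrightarrow> u \<noteq> w \<Longrightarrow> twins V E u w"
  proof -
    fix i u w assume "i < 5" "u \<in> \<phi> i" "w \<in> \<phi> i" "u \<noteq> w"
    hence "u \<in> twin_class V E w" using clsu by metis
    thus "twins V E u w" using \<open>u \<noteq> w\<close> by (auto simp: twin_class_def)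
  qed
  have disj: "\<And>i j u. i < 5 \<Longrightarrow> j < 5 \<Longrightarrow> u \<in> \<phi> i \<Longrightarrow> u \<in> \<phi> j \<Longrightarrow> i = j"
  proof -
    fix i j u assume "i < 5" "j < 5" "u \<in> \<phi> i" "u \<in> \<phi> j"
    hence "\<phi> i = \<phi> j" using clsu by metis
    thus "i = j" using bij \<open>i < 5\<close> \<open>j < 5\<close> by (auto simp: bij_betw_def inj_on_def)
  qed
  have cover: "\<And>v. v \<in> V \<Longrightarrow> \<exists>i<5. v \<in> \<phi> i"
  proof -
    fix v assume "v \<in> V"
    hence "twin_class V E v \<in> \<phi> ` {0..<5}" using bij by (auto simp: bij_betw_def twin_vertices_def)
    thus "\<exists>i<5. v \<in> \<phi> i" using self \<open>v \<in> V\<close> by force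
  qed
  have edge: "\<And>i j u w. i < 5 \<Longrightarrow> j < 5 \<Longrightarrow> i \<noteq> j \<Longrightarrow> u \<in> \<phi> i \<Longrightarrow> w \<in> \<phi> j
      \<Longrightarrow> E u w \<longleftrightarrow> C5chord_edge i j"
  proof -
    fix i j u w assume ij: "i < 5" "j < 5" "i \<noteq> j" and uw: "u \<in> \<phi> i" "w \<in> \<phi> j"
    have tvi: "\<phi> i \<in> twin_vertices V E" "\<phi> j \<in> twin_vertices V E" "\<phi> i \<noteq> \<phi> j"
      using bij ij by (auto simp: bij_betw_def inj_on_def)
    have ie: "C5chord_edge i j \<longleftrightarrow> twin_edges V E (\<phi> i) (\<phi> j)" using iso ij by auto
    show "E u w \<longleftrightarrow> C5chord_edge i j"
    proof
      assume "E u w" thus "C5chord_edge i j" using ie tvi uw by (auto simp: twin_edges_def)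
    next
      assume "C5chord_edge i j"
      then obtain u0 w0 where u0: "u0 \<in> \<phi> i" "w0 \<in> \<phi> j" "E u0 w0" using ie by (auto simp: twin_edges_def)
      have "w0 \<noteq> u" using disj ij u0 uw by metis
      have 1: "E u w0"
      proof (cases "u = u0")
        case True thus ?thesis using u0 by simp
      next
        case False show ?thesis using twin_edge[OF g same[OF ij(1) uw(1) u0(1) False] u0(3) \<open>w0 \<noteq> u\<close>] .
      qed
      have "u \<noteq> w" using disj ij uw by metis
      have "E w u"
      proof (cases "w = w0")
        case True thus ?thesis using 1 sym by simp
      next
        case False thus ?thesis using twin_edge[OF g same[OF ij(2) uw(2) u0(2) False] sym[OF 1]] \<open>u \<noteq> w\<close> by metis
      qed
      thus "E u w" using sym by blast
    qed
  qed
  obtain v3 where v3: "\<phi> 3 = {v3}" using assms(3) card_1_singletonE unfolding type_1_def by metis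
  obtain v4 where v4: "\<phi> 4 = {v4}" using assms(4) card_1_singletonE unfolding type_1_def by metis
  have v34: "v3 \<in> \<phi> 3" "v4 \<in> \<phi> 4" using v3 v4 by auto
  have idx: "\<And>w. w \<in> V \<Longrightarrow> \<exists>i<5. w \<in> \<phi> i \<and> (\<forall>k<5. w \<in> \<phi> k \<longleftrightarrow> k = i)
      \<and> (w = v3 \<longleftrightarrow> i = 3) \<and> (w = v4 \<longleftrightarrow> i = 4)"
  proof -
    fix w assume "w \<in> V"
    then obtain i where i: "i < 5" "w \<in> \<phi> i" using cover by blast
    have k: "\<forall>k<5. w \<in> \<phi> k \<longleftrightarrow> k = i" using disj i by blast
    have "w \<in> \<phi> 3 \<longleftrightarrow> i = 3" "w \<in> \<phi> 4 \<longleftrightarrow> i = 4" using k by auto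
    hence "w = v3 \<longleftrightarrow> i = 3" "w = v4 \<longleftrightarrow> i = 4" using v3 v4 by auto
    thus "?thesis w" using i k by blast
  qed
  have E3: "\<And>w. w \<in> V \<Longrightarrow> E w v3 \<longleftrightarrow> w \<in> \<phi> 2 \<or> w = v4"
  proof -
    fix w assume "w \<in> V"
    then obtain i where i: "i<5" "w \<in> \<phi> i" "\<forall>k<5. w \<in> \<phi> k \<longleftrightarrow> k = i" "w = v3 \<longleftrightarrow> i = 3" "w = v4 \<longleftrightarrow> i = 4"
      using idx by blast
    show "E w v3 \<longleftrightarrow> w \<in> \<phi> 2 \<or> w = v4"
    proof (cases "i = 3")
      case True thus ?thesis using i irr by auto
    next
      case False
      hence "E w v3 \<longleftrightarrow> C5chord_edge i 3" using edge[OF i(1) _ False i(2) v34(1)] by simp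
      moreover have "i = 0 \<or> i = 1 \<or> i = 2 \<or> i = 4" using i(1) False by arith
      ultimately show ?thesis using i by (auto simp: C5e)
    qed
  qed
  have E4: "\<And>w. w \<in> V \<Longrightarrow> E w v4 \<longleftrightarrow> w \<in> \<phi> 0 \<or> w = v3"
  proof -
    fix w assume "w \<in> V"
    then obtain i where i: "i<5" "w \<in> \<phi> i" "\<forall>k<5. w \<in> \<phi> k \<longleftrightarrow> k = i" "w = v3 \<longleftrightarrow> i = 3" "w = v4 \<longleftrightarrow> i = 4"
      using idx by blast
    show "E w v4 \<longleftrightarrow> w \<in> \<phi> 0 \<or> w = v3"
    proof (cases "i = 4")
      case True thus ?thesis using i irr by auto
    next
      case False
      hence "E w v4 \<longleftrightarrow> C5chord_edge i 4" using edge[OF i(1) _ False i(2) v34(2)] by simp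
      moreover have "i = 0 \<or> i = 1 \<or> i = 2 \<or> i = 3" using i(1) False by arith
      ultimately show ?thesis using i by (auto simp: C5e)
    qed
  qed
  have d34: "v3 \<noteq> v4" using disj[of 3 4 v3] v34 by auto
  have v3n: "\<And>k. k < 3 \<Longrightarrow> v3 \<notin> \<phi> k" 
  proof - fix k :: nat assume "k < 3" thus "v3 \<notin> \<phi> k" using disj[of k 3 v3] v34 by auto qed
  have v4n: "\<And>k. k < 3 \<Longrightarrow> v4 \<notin> \<phi> k" 
  proof - fix k :: nat assume "k < 3" thus "v4 \<notin> \<phi> k" using disj[of k 4 v4] v34 by auto qed
  have d01: "\<phi> 0 \<inter> \<phi> 1 = {}" "\<phi> 0 \<inter> \<phi> 2 = {}" "\<phi> 1 \<inter> \<phi> 2 = {}"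
    using disj[of 0 1] disj[of 0 2] disj[of 1 2] by fastforce+
  have d2: "\<And>y w. y \<in> \<phi> 2 \<Longrightarrow> w \<in> \<phi> 0 \<union> \<phi> 1 \<Longrightarrow> E y w"
  proof -
    fix y w assume "y \<in> \<phi> 2" "w \<in> \<phi> 0 \<union> \<phi> 1"
    thus "E y w" using edge[of 2 0 y w] edge[of 2 1 y w] by (auto simp: C5e)
  qed
  define a where "a = card (\<phi> 0)"
  define b where "b = card (\<phi> 1)"
  define c where "c = card (\<phi> 2)"
  define m where "m = max a (max b c)"
  have abc: "a \<ge> 1" "b \<ge> 1" "c \<ge> 1" using ne fin unfolding a_def b_def c_def
    by (simp_all add: Suc_leI card_gt_0_iff)
  have Vu: "V = \<phi> 0 \<union> \<phi> 1 \<union> \<phi> 2 \<union> {v3, v4}"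
  proof
    show "V \<subseteq> \<phi> 0 \<union> \<phi> 1 \<union> \<phi> 2 \<union> {v3, v4}"
    proof
      fix w assume "w \<in> V"
      then obtain i where i: "i<5" "w \<in> \<phi> i" "w = v3 \<longleftrightarrow> i = 3" "w = v4 \<longleftrightarrow> i = 4"
        using idx by blast
      have "i = 0 \<or> i = 1 \<or> i = 2 \<or> i = 3 \<or> i = 4" using i(1) by arith
      thus "w \<in> \<phi> 0 \<union> \<phi> 1 \<union> \<phi> 2 \<union> {v3, v4}" using i by auto
    qed
  next
    show "\<phi> 0 \<union> \<phi> 1 \<union> \<phi> 2 \<union> {v3, v4} \<subseteq> V" using subV[of 0] subV[of 1] subV[of 2] subV[of 3] subV[of 4] v34 by auto
  qed
  have cardV: "card V = a + b + c + 2"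
  proof -
    have "card (\<phi> 0 \<union> \<phi> 1 \<union> \<phi> 2 \<union> {v3, v4}) = card (\<phi> 0 \<union> \<phi> 1 \<union> \<phi> 2) + card {v3, v4}"
      by (rule card_Un_disjoint) (use fin v3n v4n in auto)
    also have "card (\<phi> 0 \<union> \<phi> 1 \<union> \<phi> 2) = card (\<phi> 0 \<union> \<phi> 1) + card (\<phi> 2)"
      by (rule card_Un_disjoint) (use fin d01 in auto)
    also have "card (\<phi> 0 \<union> \<phi> 1) = a + b" unfolding a_def b_def
      by (rule card_Un_disjoint) (use fin d01 in auto)
    finally show ?thesis using Vu d34 c_def by simp
  qed
  obtain h0 where h0: "bij_betw h0 (\<phi> 0) {0..<a}" using ex_bij_betw_finite_nat[OF fin[of 0]] unfolding a_def by auto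
  obtain h1 where h1: "bij_betw h1 (\<phi> 1) {0..<b}" using ex_bij_betw_finite_nat[OF fin[of 1]] unfolding b_def by auto
  obtain h2 where h2: "bij_betw h2 (\<phi> 2) {0..<c}" using ex_bij_betw_finite_nat[OF fin[of 2]] unfolding c_def by auto
  define col where "col v = (if v = v3 then m else if v \<in> \<phi> 0 then h0 v else if v \<in> \<phi> 1 then h1 v
     else if v \<in> \<phi> 2 then h2 v else 0)" for v
  have colm: "\<And>v. v \<in> V \<Longrightarrow> v \<noteq> v3 \<Longrightarrow> col v < m"
  proof -
    fix v assume "v \<in> V" "v \<noteq> v3"
    have "h0 v < a" if "v \<in> \<phi> 0" using h0 that by (auto simp: bij_betw_def)
    moreover have "h1 v < b" if "v \<in> \<phi> 1" using h1 that by (auto simp: bij_betw_def)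
    moreover have "h2 v < c" if "v \<in> \<phi> 2" using h2 that by (auto simp: bij_betw_def)
    ultimately show "col v < m" unfolding col_def m_def using \<open>v \<noteq> v3\<close> abc by auto
  qed
  have colr: "col ` V \<subseteq> {..<m+1}"
  proof
    fix x assume "x \<in> col ` V"
    then obtain v where "v \<in> V" "x = col v" by blast
    thus "x \<in> {..<m+1}" using colm[of v] by (cases "v = v3") (auto simp: col_def)
  qed
  have dist: "distinguishing V E col"
    unfolding distinguishing_def
  proof (intro allI impI)
    fix f assume H: "automorphism V E f \<and> (\<forall>v\<in>V. col (f v) = col v)"
    hence aut: "automorphism V E f" and cf: "\<And>v. v \<in> V \<Longrightarrow> col (f v) = col v" by auto
    have bf: "bij_betw f V V" and isf: "\<And>u w. u \<in> V \<Longrightarrow> w \<in> V \<Longrightarrow> E u w \<longleftrightarrow> E (f u) (f w)"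
      using aut by (auto simp: automorphism_def graph_iso_def)
    have fV: "\<And>v. v \<in> V \<Longrightarrow> f v \<in> V" using bf by (auto simp: bij_betw_def)
    have injf: "inj_on f V" using bf by (auto simp: bij_betw_def)
    have v3V: "v3 \<in> V" and v4V: "v4 \<in> V" using Vu by auto
    have f3: "f v3 = v3"
    proof (rule ccontr)
      assume "f v3 \<noteq> v3"
      hence "col (f v3) < m" using colm fV v3V by blast
      moreover have "col v3 = m" by (simp add: col_def)
      ultimately show False using cf v3V by simp
    qed
    have f4: "f v4 = v4"
    proof (rule ccontr)
      assume ne4: "f v4 \<noteq> v4"
      have "E v4 v3" using E3 v4V by simp
      hence e3: "E (f v4) v3" using isf[OF v4V v3V] f3 by simp
      hence y: "f v4 \<in> \<phi> 2" using E3[OF fV[OF v4V]] ne4 by simp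
      have N4: "nbhd V E v4 = insert v3 (\<phi> 0)"
        unfolding nbhd_def using E4 sym subV[of 0] v3V by auto
      have Ny: "insert v3 (\<phi> 0 \<union> \<phi> 1) \<subseteq> nbhd V E (f v4)"
        unfolding nbhd_def using d2[OF y] e3 sym subV[of 0] subV[of 1] v3V by auto
      have "card (\<phi> 0 \<union> \<phi> 1) = a + b" unfolding a_def b_def
        by (rule card_Un_disjoint) (use fin d01 in auto)
      hence "card (insert v3 (\<phi> 0 \<union> \<phi> 1)) = a + b + 1"
        using fin[of 0] fin[of 1] v3n[of 0] v3n[of 1] by simp
      moreover have "card (nbhd V E (f v4)) = a + 1"
      proof -
        have "card (nbhd V E (f v4)) = card (f ` nbhd V E v4)" using aut_nbhd[OF aut g v4V] by simp
        also have "\<dots> = card (nbhd V E v4)"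
          by (rule card_image) (rule inj_on_subset[OF injf], auto simp: nbhd_def)
        also have "\<dots> = a + 1" using N4 fin v3n a_def by simp
        finally show ?thesis .
      qed
      moreover have "finite (nbhd V E (f v4))" using finV by (auto simp: nbhd_def)
      ultimately show False using card_mono[OF _ Ny] abc by simp
    qed
    have pres: "\<And>v. v \<in> V \<Longrightarrow> (f v = v3 \<longleftrightarrow> v = v3) \<and> (f v = v4 \<longleftrightarrow> v = v4)
        \<and> (E (f v) v3 \<longleftrightarrow> E v v3) \<and> (E (f v) v4 \<longleftrightarrow> E v v4)"
    proof -
      fix v assume vV: "v \<in> V"
      have "f v = v3 \<longleftrightarrow> f v = f v3" "f v = v4 \<longleftrightarrow> f v = f v4" using f3 f4 by auto
      moreover have "f v = f v3 \<longleftrightarrow> v = v3" "f v = f v4 \<longleftrightarrow> v = v4"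
        using inj_on_eq_iff[OF injf vV v3V] inj_on_eq_iff[OF injf vV v4V] by auto
      moreover have "E (f v) v3 \<longleftrightarrow> E v v3" "E (f v) v4 \<longleftrightarrow> E v v4"
        using isf[OF vV v3V] isf[OF vV v4V] f3 f4 by auto
      ultimately show "?thesis v" by simp
    qed
    have memi: "\<And>v. v \<in> V \<Longrightarrow> (v \<in> \<phi> 0 \<longleftrightarrow> E v v4 \<and> v \<noteq> v3) \<and> (v \<in> \<phi> 2 \<longleftrightarrow> E v v3 \<and> v \<noteq> v4)
        \<and> (v \<in> \<phi> 1 \<longleftrightarrow> \<not> E v v3 \<and> \<not> E v v4 \<and> v \<noteq> v3 \<and> v \<noteq> v4)"
    proof -
      fix v assume vV: "v \<in> V"
      show "?thesis v" using E3[OF vV] E4[OF vV] vV Vu v3n[of 0] v3n[of 1] v3n[of 2]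
        v4n[of 0] v4n[of 1] v4n[of 2] d01 d34 by auto
    qed
    have fcls: "\<And>v k. v \<in> V \<Longrightarrow> k < 3 \<Longrightarrow> f v \<in> \<phi> k \<longleftrightarrow> v \<in> \<phi> k"
    proof -
      fix v :: 'a and k :: nat assume "v \<in> V" "k < 3"
      hence "k = 0 \<or> k = 1 \<or> k = 2" by arith
      thus "f v \<in> \<phi> k \<longleftrightarrow> v \<in> \<phi> k" using memi[OF \<open>v \<in> V\<close>] memi[OF fV[OF \<open>v \<in> V\<close>]] pres[OF \<open>v \<in> V\<close>]
        by auto
    qed
    show "\<forall>v\<in>V. f v = v"
    proof
      fix v assume vV: "v \<in> V"
      hence "v \<in> \<phi> 0 \<or> v \<in> \<phi> 1 \<or> v \<in> \<phi> 2 \<or> v = v3 \<or> v = v4" using Vu by blast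
      moreover have "v \<in> \<phi> 0 \<Longrightarrow> f v = v"
      proof -
        assume v0: "v \<in> \<phi> 0"
        hence fv0: "f v \<in> \<phi> 0" using fcls vV by simp
        have "f v \<noteq> v3" "v \<noteq> v3" using v0 fv0 v3n by auto
        hence "h0 (f v) = h0 v" using cf[OF vV] v0 fv0 by (simp add: col_def)
        thus "f v = v" using h0 v0 fv0 by (auto simp: bij_betw_def inj_on_def)
      qed
      moreover have "v \<in> \<phi> 1 \<Longrightarrow> f v = v"
      proof -
        assume v0: "v \<in> \<phi> 1"
        hence fv0: "f v \<in> \<phi> 1" using fcls vV by simp
        have "f v \<noteq> v3" "v \<noteq> v3" "f v \<notin> \<phi> 0" "v \<notin> \<phi> 0" using v0 fv0 v3n d01 by auto
        hence "h1 (f v) = h1 v" using cf[OF vV] v0 fv0 by (simp add: col_def)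
        thus "f v = v" using h1 v0 fv0 by (auto simp: bij_betw_def inj_on_def)
      qed
      moreover have "v \<in> \<phi> 2 \<Longrightarrow> f v = v"
      proof -
        assume v0: "v \<in> \<phi> 2"
        hence fv0: "f v \<in> \<phi> 2" using fcls vV by simp
        have "f v \<noteq> v3" "v \<noteq> v3" "f v \<notin> \<phi> 0" "v \<notin> \<phi> 0" "f v \<notin> \<phi> 1" "v \<notin> \<phi> 1"
          using v0 fv0 v3n d01 by auto
        hence "h2 (f v) = h2 v" using cf[OF vV] v0 fv0 by (simp add: col_def)
        thus "f v = v" using h2 v0 fv0 by (auto simp: bij_betw_def inj_on_def)
      qed
      ultimately show "f v = v" using f3 f4 by blast
    qed
  qed
  have "dist_number V E \<le> m + 1"
    unfolding dist_number_def by (rule Least_le) (use colr dist in blast)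
  moreover have "m + 1 < a + b + c" using abc unfolding m_def by simp
  ultimately show ?thesis using cardV by simp
qed

end
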